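(* For every integer $n\geq 1$, the sequence $\Lambda_n$ of chains (defined in the context) is a 3-Gray code, i.e., any two consecutive chains in $\Lambda_n$, viewed as strings over the alphabet $\{0,1,*\}$, differ in at most three positions.
   Context: Let $D$ be the set of all bitstrings (including the empty string $\varepsilon$) with equally many $0$s and $1$s such that every prefix contains at least as many $0$s as $1$s. Each chain of the Greene–Kleitman symmetric chain decomposition of $Q_n$ (the hypercube on $\{0,1\}^n$) is encoded as a string of length $n$ over $\{0,1,*\}$ of the form $u_0*u_1*\cdots*u_{h-1}*u_h$ with $u_0,\ldots,u_h\in D$; its vertices are obtained by replacing the $*$s by $i$ ones followed by $h-i$ zeros, $i=0,\ldots,h$, and every such string occurs as a chain. The length $|C|$ of a chain $C$ is its number of $*$s. For a string $C$ over $\{0,1,*\}$ with at least two $*$s, $f(C)$ (resp. $\ell(C)$) denotes the string obtained by replacing the first two (resp. last two) $*$s by $0$ and $1$, respectively. For a sequence $\Gamma$, $\Gamma^R$ is its reversal, and $*C*$, $0C1$ denote concatenations. The sequences $\Lambda_n$ are defined inductively: for even $n$, $\Lambda_0:=\varepsilon$ (the one-element sequence consisting of the empty chain) and for odd $n$, $\Lambda_1:=*$. For $n\ge 0$, given $\Lambda_n=C_1,\ldots,C_N$, set $\Lambda_{n+2}:=\rho(C_1),\ldots,\rho(C_N)$ (concatenation of sequences), where $\rho(C):=\lambda(C)$ if $|C|\equiv n \pmod 4$ and $\rho(C):=\lambda(C)^R$ otherwise, and where for even $n$: $\lambda(C):= *C*,\ f( *C* ),\ f(\ell( *C* )),\ \ell(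 *C* )$ if $|C|\ge 2$, and $\lambda(C):=*C*,\ 0C1$ if $|C|=0$; for odd $n$: $\lambda(C):=*C*,\ \ell( *C* ),\ \ell(f( *C* )),\ f( *C* )$ if $|C|\ge 3$, and $\lambda(C):=*C*,\ \ell( *C* ),\ f( *C* )$ if $|C|=1$. *)

theory Defs
  imports Main
begin

datatype sym = Zero | One | Star

type_synonym chain = "sym list"

text \<open>Length of a chain = number of stars.\<close>
definition nstars :: "chain \<Rightarrow> nat" where
  "nstars C = length (filter (\<lambda>c. c = Star) C)"

fun repl1 :: "sym \<Rightarrow> chain \<Rightarrow> chain" where
  "repl1 b [] = []"
| "repl1 b (c # cs) = (if c = Star then b # cs else c # repl1 b cs)"

fun repl2 :: "sym \<Rightarrow> sym \<Rightarrow> chain \<Rightarrow> chain" where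
  "repl2 a b [] = []"
| "repl2 a b (c # cs) =
     (if c = Star then a # repl1 b cs else c # repl2 a b cs)"

definition ffirst :: "chain \<Rightarrow> chain" where
  "ffirst C = repl2 Zero One C"

definition llast :: "chain \<Rightarrow> chain" where
  "llast C = rev (repl2 One Zero (rev C))"

definition wrap :: "chain \<Rightarrow> chain" where
  "wrap C = Star # C @ [Star]"

definition lam :: "nat \<Rightarrow> chain \<Rightarrow> chain list" where
  "lam n C =
    (if even n then
       (if nstars C \<ge> 2
        then [wrap C, ffirst (wrap C), ffirst (llast (wrap C)), llast (wrap C)]
        else [wrap C, Zero # C @ [One]])
     else
       (if nstars C \<ge> 3
        then [wrap C, llast (wrap C), llast (ffirst (wrap C)), ffirst (wrap C)]
        else [wrap C, llast (wrap C), ffirst (wrap C)]))"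

definition rho :: "nat \<Rightarrow> chain \<Rightarrow> chain list" where
  "rho n C = (if nstars C mod 4 = n mod 4 then lam n C else rev (lam n C))"

fun Lambda :: "nat \<Rightarrow> chain list" where
  "Lambda 0 = [[]]"
| "Lambda (Suc 0) = [[Star]]"
| "Lambda (Suc (Suc n)) = concat (map (rho n) (Lambda n))"

definition hamming :: "chain \<Rightarrow> chain \<Rightarrow> nat" where
  "hamming x y = card {j. j < length x \<and> j < length y \<and> x ! j \<noteq> y ! j}"

end

theory Submission
  imports Defs
begin

lemma ns_simps[simp]:
  "nstars [] = 0"
  "nstars (x # xs) = (if x = Star then Suc (nstars xs) else nstars xs)"
  "nstars (xs @ ys) = nstars xs + nstars ys"
  by (auto simp: nstars_def)

lemma ns0[simp]: "Star \<notin> set xs \<Longrightarrow> nstars xs = 0"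
  by (induction xs) auto

lemma ns0_iff: "nstars xs = 0 \<longleftrightarrow> Star \<notin> set xs"
  by (induction xs) auto

lemma repl1_nostar[simp]: "Star \<notin> set xs \<Longrightarrow> repl1 b xs = xs"
  by (induction xs) auto

lemma repl1_app1[simp]: "Star \<notin> set xs \<Longrightarrow> repl1 b (xs @ ys) = xs @ repl1 b ys"
  by (induction xs) auto

lemma repl1_app2[simp]: "Star \<in> set xs \<Longrightarrow> repl1 b (xs @ ys) = repl1 b xs @ ys"
  by (induction xs) auto

lemma repl2_app1[simp]: "Star \<notin> set xs \<Longrightarrow> repl2 a b (xs @ ys) = xs @ repl2 a b ys"
  by (induction xs) auto

definition mA :: "chain \<Rightarrow> chain \<Rightarrow> bool" where
  "mA x y = (\<exists>a b c. x = a @ Star # b @ Star # c \<and> y = a @ Zero # b @ One # c)"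
definition mB :: "chain \<Rightarrow> chain \<Rightarrow> bool" where
  "mB x y = (\<exists>a b c d. x = a @ Star # b @ Star # c @ Zero # d \<and> y = a @ Zero # b @ Zero # c @ One # d)"
definition mC :: "chain \<Rightarrow> chain \<Rightarrow> bool" where
  "mC x y = (\<exists>a b c d. x = a @ Star # b @ Zero # c @ One # d \<and> y = a @ Zero # b @ One # c @ Star # d
     \<and> Star \<notin> set a \<and> Star \<notin> set b \<and> Star \<notin> set c \<and> Star \<notin> set d)"

lemma mA_I: "mA (a @ Star # b @ Star # c) (a @ Zero # b @ One # c)"
  unfolding mA_def by blast
lemma mB_I: "mB (a @ Star # b @ Star # c @ Zero # d) (a @ Zero # b @ Zero # c @ One # d)"
  unfolding mB_def by blast
lemma mC_I: "Star \<notin> set a \<Longrightarrow> Star \<notin> set b \<Longrightarrow> Star \<notin> set c \<Longrightarrow> Star \<notin> set d \<Longrightarrow>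
  mC (a @ Star # b @ Zero # c @ One # d) (a @ Zero # b @ One # c @ Star # d)"
  unfolding mC_def by blast

definition G :: "nat \<Rightarrow> chain \<Rightarrow> chain" where
  "G n x = (if even n then ffirst x else llast x)"

definition Inv :: "nat \<Rightarrow> chain \<Rightarrow> chain \<Rightarrow> bool" where
  "Inv n x y = (if nstars x mod 4 = n mod 4 then
      (2 \<le> nstars x \<and> y = G n x) \<or> (2 \<le> nstars y \<and> x = G n y) \<or> (odd n \<and> mC y x)
    else mA x y \<or> mA y x \<or> mB x y \<or> mB y x \<or> mC x y)"

lemma hamming_filter: "hamming x y = length (filter (\<lambda>p. fst p \<noteq> snd p) (zip x y))"
  unfolding hamming_def length_filter_conv_card by (rule arg_cong[where f=card]) auto

lemma filter_zip_self[simp]: "filter (\<lambda>p. fst p \<noteq> snd p) (zip a a) = []"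
  by (induction a) auto

lemma hamming_sym: "hamming x y = hamming y x"
  unfolding hamming_def by (rule arg_cong[where f=card]) auto

lemma ham_A: "mA x y \<Longrightarrow> hamming x y \<le> 3"
  unfolding mA_def hamming_filter by (auto simp: zip_append)
lemma ham_B: "mB x y \<Longrightarrow> hamming x y \<le> 3"
  unfolding mB_def hamming_filter by (auto simp: zip_append)
lemma ham_C: "mC x y \<Longrightarrow> hamming x y \<le> 3"
  unfolding mC_def hamming_filter by (auto simp: zip_append)

lemma star_pos: "0 < nstars x \<Longrightarrow> Star \<in> set x"
  using ns0 by fastforce

lemma dec_first: "Star \<in> set x \<Longrightarrow> \<exists>u t. x = u @ Star # t \<and> Star \<notin> set u"
  by (metis split_list_first)
lemma dec_last: "Star \<in> set x \<Longrightarrow> \<exists>u t. x = u @ Star # t \<and> Star \<notin> set t"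
  by (metis split_list_last)

lemma dec_first2: assumes "2 \<le> nstars x"
  shows "\<exists>u v m. x = u @ Star # v @ Star # m \<and> Star \<notin> set u \<and> Star \<notin> set v"
proof -
  have "Star \<in> set x" using assms star_pos by simp
  then obtain u t where x: "x = u @ Star # t" "Star \<notin> set u" using dec_first by blast
  have "Star \<in> set t" using assms x star_pos by simp
  then obtain v m where "t = v @ Star # m" "Star \<notin> set v" using dec_first by blast
  thus ?thesis using x by blast
qed

lemma dec_last2: assumes "2 \<le> nstars x"
  shows "\<exists>u v m. x = u @ Star # v @ Star # m \<and> Star \<notin> set v \<and> Star \<notin> set m"
proof -
  have "Star \<in> set x" using assms star_pos by simp
  then obtain t m where x: "x = t @ Star # m" "Star \<notin> set m" using dec_last by blast
  have "Star \<in> set t" using assms x star_pos by simp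
  then obtain u v where "t = u @ Star # v" "Star \<notin> set v" using dec_last by blast
  thus ?thesis using x by auto
qed

lemma dec_fl: assumes "2 \<le> nstars x"
  shows "\<exists>u v m. x = u @ Star # v @ Star # m \<and> Star \<notin> set u \<and> Star \<notin> set m"
proof -
  have "Star \<in> set x" using assms star_pos by simp
  then obtain u t where x: "x = u @ Star # t" "Star \<notin> set u" using dec_first by blast
  have "Star \<in> set t" using assms x star_pos by simp
  then obtain v m where "t = v @ Star # m" "Star \<notin> set m" using dec_last by blast
  thus ?thesis using x by blast
qed

lemma dec1: assumes "nstars x = 1"
  shows "\<exists>u t. x = u @ Star # t \<and> Star \<notin> set u \<and> Star \<notin> set t"
proof -
  have "Star \<in> set x" using assms star_pos by simp
  then obtain u t where x: "x = u @ Star # t" "Star \<notin> set u" using dec_first by blast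
  have "Star \<notin> set t" using assms x ns0_iff by simp
  thus ?thesis using x by blast
qed

lemma ffirst_form: "Star \<notin> set u \<Longrightarrow> Star \<notin> set v \<Longrightarrow>
   ffirst (u @ Star # v @ Star # m) = u @ Zero # v @ One # m"
  by (simp add: ffirst_def)

lemma llast_form: "Star \<notin> set v \<Longrightarrow> Star \<notin> set m \<Longrightarrow>
   llast (u @ Star # v @ Star # m) = u @ Zero # v @ One # m"
  by (simp add: llast_def)

lemma mA_ffirst: "2 \<le> nstars x \<Longrightarrow> mA x (ffirst x)"
  using dec_first2[of x] ffirst_form mA_I by metis
lemma mA_llast: "2 \<le> nstars x \<Longrightarrow> mA x (llast x)"
  using dec_last2[of x] llast_form mA_I by metis
lemma mA_G: "2 \<le> nstars x \<Longrightarrow> mA x (G n x)"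
  by (simp add: G_def mA_ffirst mA_llast)

lemma ham_Inv: "Inv n x y \<Longrightarrow> hamming x y \<le> 3"
  unfolding Inv_def
  by (metis ham_A ham_B ham_C hamming_sym mA_G)

lemma InvY_down: "nstars x mod 4 = n mod 4 \<Longrightarrow> 2 \<le> nstars x \<Longrightarrow> y = G n x \<Longrightarrow> Inv n x y"
  unfolding Inv_def by simp
lemma InvY_up: "nstars x mod 4 = n mod 4 \<Longrightarrow> 2 \<le> nstars y \<Longrightarrow> x = G n y \<Longrightarrow> Inv n x y"
  unfolding Inv_def by simp
lemma InvY_C: "nstars x mod 4 = n mod 4 \<Longrightarrow> odd n \<Longrightarrow> mC y x \<Longrightarrow> Inv n x y"
  unfolding Inv_def by simp
lemma InvN: "nstars x mod 4 \<noteq> n mod 4 \<Longrightarrow> mA x y \<or> mA y x \<or> mB x y \<or> mB y x \<or> mC x y \<Longrightarrow> Inv n x y"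
  unfolding Inv_def by simp

lemma mod4_cases: "(x::nat) mod 4 = 0 \<or> x mod 4 = 1 \<or> x mod 4 = 2 \<or> x mod 4 = 3"
  using mod_less_divisor[of 4 x] by linarith
lemma plus2_mod: "Suc (Suc b) mod 4 = (b mod 4 + 2) mod 4"
  by (metis add_2_eq_Suc' mod_add_left_eq)
lemma m1: "a mod 4 = b mod 4 \<Longrightarrow> Suc (Suc a) mod 4 = Suc (Suc b) mod 4"
  for a b :: nat by (metis add_2_eq_Suc mod_add_right_eq)
lemma m2: "a mod 4 = b mod 4 \<Longrightarrow> a mod 4 \<noteq> Suc (Suc b) mod 4"
  for a b :: nat unfolding plus2_mod using mod4_cases[of b] by (elim disjE; simp)
lemma m3: "a mod 4 = Suc (Suc b) mod 4 \<Longrightarrow> Suc (Suc a) mod 4 = b mod 4"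
  for a b :: nat unfolding plus2_mod using mod4_cases[of b] mod4_cases[of a] by (elim disjE; simp)
lemma ev4: "even (x::nat) \<Longrightarrow> x mod 4 = 0 \<or> x mod 4 = 2"
proof -
  assume "even x"
  have "even (x mod 4)" using \<open>even x\<close> by (simp add: even_mod_4_div_2 dvd_mod_iff)
  then show ?thesis using mod4_cases[of x] by auto
qed
lemma od4: "odd (x::nat) \<Longrightarrow> x mod 4 = 1 \<or> x mod 4 = 3"
proof -
  assume "odd x"
  have "odd (x mod 4)" using \<open>odd x\<close> by (simp add: even_mod_4_div_2 dvd_mod_iff)
  then show ?thesis using mod4_cases[of x] by auto
qed
lemma m4: "even a \<Longrightarrow> even b \<Longrightarrow> a mod 4 \<noteq> b mod 4 \<Longrightarrow> a mod 4 = Suc (Suc b) mod 4"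
  for a b :: nat
proof -
  assume h: "even a" "even b" "a mod 4 \<noteq> b mod 4"
  show ?thesis unfolding plus2_mod using ev4[OF h(1)] ev4[OF h(2)] h(3) by (elim disjE; simp)
qed
lemma m5: "odd a \<Longrightarrow> odd b \<Longrightarrow> a mod 4 \<noteq> b mod 4 \<Longrightarrow> a mod 4 = Suc (Suc b) mod 4"
  for a b :: nat
proof -
  assume h: "odd a" "odd b" "a mod 4 \<noteq> b mod 4"
  show ?thesis unfolding plus2_mod using od4[OF h(1)] od4[OF h(2)] h(3) by (elim disjE; simp)
qed
lemma m6: "Suc (Suc a) mod 4 = b mod 4 \<Longrightarrow> a mod 4 = Suc (Suc b) mod 4"
  for a b :: nat unfolding plus2_mod using mod4_cases[of b] mod4_cases[of a] by (elim disjE; simp)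
lemma m7: "Suc (Suc a) mod 4 = Suc (Suc b) mod 4 \<Longrightarrow> a mod 4 = b mod 4"
  for a b :: nat unfolding plus2_mod using mod4_cases[of b] mod4_cases[of a] by (elim disjE; simp)

lemma within_even:
  assumes "even n" "even (nstars C)"
  shows "successively (Inv (Suc (Suc n))) (rho n C)"
proof (cases "2 \<le> nstars C")
  case True
  then obtain u m t where C: "C = u @ Star # m @ Star # t" "Star \<notin> set u" "Star \<notin> set t"
    using dec_fl by blast
  define k where "k = nstars C"
  define j where "j = nstars m"
  define W where "W = Star # u @ Star # m @ Star # t @ [Star]"
  define F where "F = Zero # u @ One # m @ Star # t @ [Star]"
  define FL where "FL = Zero # u @ One # m @ Zero # t @ [One]"
  define L where "L = Star # u @ Star # m @ Zero # t @ [One]"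
  have k: "k = Suc (Suc j)" using C k_def j_def by simp
  have ns: "nstars W = Suc (Suc k)" "nstars F = k" "nstars FL = j" "nstars L = k"
    using C k j_def by (simp_all add: W_def F_def FL_def L_def)
  have lam: "lam n C = [W, F, FL, L]"
    using assms True C by (simp add: lam_def wrap_def ffirst_def llast_def W_def F_def FL_def L_def)
  have g1: "G (Suc (Suc n)) W = F"
    using assms C by (simp add: G_def ffirst_def W_def F_def)
  have g2: "G (Suc (Suc n)) L = FL"
    using assms C by (simp add: G_def ffirst_def L_def FL_def)
  have a: "mA F FL"
    using mA_I[of "Zero # u @ One # m" t "[]"] by (simp add: F_def FL_def)
  have k2: "2 \<le> k" using k by simp
  show ?thesis
  proof (cases "k mod 4 = n mod 4")
    case True
    have h: "nstars W mod 4 = Suc (Suc n) mod 4" "nstars F mod 4 \<noteq> Suc (Suc n) mod 4"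
       "nstars FL mod 4 = Suc (Suc n) mod 4"
      unfolding ns using m1[OF True] m2[OF True] m6[of j n] True k by auto
    have "Inv (Suc (Suc n)) W F" by (rule InvY_down) (use h ns k2 g1 in auto)
    moreover have "Inv (Suc (Suc n)) F FL" by (rule InvN) (use h a in auto)
    moreover have "Inv (Suc (Suc n)) FL L" by (rule InvY_up) (use h ns k2 g2 in auto)
    ultimately show ?thesis using True unfolding rho_def k_def[symmetric] lam by simp
  next
    case False
    have ke: "even k" using assms k_def by simp
    have h0: "k mod 4 = Suc (Suc n) mod 4" using m4[OF ke assms(1) False] .
    have h: "nstars L mod 4 = Suc (Suc n) mod 4" "nstars FL mod 4 \<noteq> Suc (Suc n) mod 4"
       "nstars F mod 4 = Suc (Suc n) mod 4"
      unfolding ns using h0 m2[of j n] m7[of j n] k by auto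
    have "Inv (Suc (Suc n)) L FL" by (rule InvY_down) (use h ns k2 g2 in auto)
    moreover have "Inv (Suc (Suc n)) FL F" by (rule InvN) (use h a in auto)
    moreover have "Inv (Suc (Suc n)) F W" by (rule InvY_up) (use h ns k2 g1 in auto)
    ultimately show ?thesis using False unfolding rho_def k_def[symmetric] lam by simp
  qed
next
  case False
  then have "nstars C = 0" using assms(2) by (cases "nstars C") (auto simp: not_le)
  then have C: "Star \<notin> set C" using ns0_iff by blast
  have lam: "lam n C = [Star # C @ [Star], Zero # C @ [One]]"
    using assms False by (simp add: lam_def wrap_def)
  have g: "G (Suc (Suc n)) (Star # C @ [Star]) = Zero # C @ [One]"
    using assms C by (simp add: G_def ffirst_def)
  show ?thesis
  proof (cases "n mod 4 = 0")
    case True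
    have "Suc (Suc 0) mod 4 = Suc (Suc n) mod 4" using m1[of 0 n] True by simp
    then have "Inv (Suc (Suc n)) (Star # C @ [Star]) (Zero # C @ [One])"
      by (intro InvY_down) (use C g in auto)
    then show ?thesis using True C unfolding rho_def lam by simp
  next
    case False
    have "0 mod 4 = Suc (Suc n) mod 4" using m4[of 0 n] False assms(1) by simp
    then have "Inv (Suc (Suc n)) (Zero # C @ [One]) (Star # C @ [Star])"
      by (intro InvY_up) (use C g in auto)
    then show ?thesis using False C unfolding rho_def lam by simp
  qed
qed

lemma within_odd:
  assumes "odd n" "odd (nstars C)"
  shows "successively (Inv (Suc (Suc n))) (rho n C)"
proof (cases "2 \<le> nstars C")
  case True
  then obtain u m t where C: "C = u @ Star # m @ Star # t" "Star \<notin> set u" "Star \<notin> set t"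
    using dec_fl by blast
  define k where "k = nstars C"
  define j where "j = nstars m"
  define W where "W = Star # u @ Star # m @ Star # t @ [Star]"
  define F where "F = Zero # u @ One # m @ Star # t @ [Star]"
  define LF where "LF = Zero # u @ One # m @ Zero # t @ [One]"
  define L where "L = Star # u @ Star # m @ Zero # t @ [One]"
  have k: "k = Suc (Suc j)" using C k_def j_def by simp
  have k3: "3 \<le> k" using k assms(2) k_def by (cases j) auto
  have ns: "nstars W = Suc (Suc k)" "nstars F = k" "nstars LF = j" "nstars L = k"
    using C k j_def by (simp_all add: W_def F_def LF_def L_def)
  have lam: "lam n C = [W, L, LF, F]"
    using assms k3 C k_def by (simp add: lam_def wrap_def ffirst_def llast_def W_def F_def LF_def L_def)
  have g1: "G (Suc (Suc n)) W = L"
    using assms C by (simp add: G_def llast_def W_def L_def)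
  have g2: "G (Suc (Suc n)) F = LF"
    using assms C by (simp add: G_def llast_def F_def LF_def)
  have a: "mA L LF"
    using mA_I[of "[]" u "m @ Zero # t @ [One]"] by (simp add: L_def LF_def)
  have k2: "2 \<le> k" using k by simp
  show ?thesis
  proof (cases "k mod 4 = n mod 4")
    case True
    have h: "nstars W mod 4 = Suc (Suc n) mod 4" "nstars L mod 4 \<noteq> Suc (Suc n) mod 4"
       "nstars LF mod 4 = Suc (Suc n) mod 4"
      unfolding ns using m1[OF True] m2[OF True] m6[of j n] True k by auto
    have "Inv (Suc (Suc n)) W L" by (rule InvY_down) (use h ns k2 g1 in auto)
    moreover have "Inv (Suc (Suc n)) L LF" by (rule InvN) (use h a in auto)
    moreover have "Inv (Suc (Suc n)) LF F" by (rule InvY_up) (use h ns k2 g2 in auto)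
    ultimately show ?thesis using True unfolding rho_def k_def[symmetric] lam by simp
  next
    case False
    have ke: "odd k" using assms k_def by simp
    have h0: "k mod 4 = Suc (Suc n) mod 4" using m5[OF ke assms(1) False] .
    have h: "nstars F mod 4 = Suc (Suc n) mod 4" "nstars LF mod 4 \<noteq> Suc (Suc n) mod 4"
       "nstars L mod 4 = Suc (Suc n) mod 4"
      unfolding ns using h0 m2[of j n] m7[of j n] k by auto
    have "Inv (Suc (Suc n)) F LF" by (rule InvY_down) (use h ns k2 g2 in auto)
    moreover have "Inv (Suc (Suc n)) LF L" by (rule InvN) (use h a in auto)
    moreover have "Inv (Suc (Suc n)) L W" by (rule InvY_up) (use h ns k2 g1 in auto)
    ultimately show ?thesis using False unfolding rho_def k_def[symmetric] lam by simp
  qed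
next
  case False
  then have k1: "nstars C = 1" using assms(2) by (cases "nstars C") (auto simp: not_le)
  then obtain u t where C: "C = u @ Star # t" "Star \<notin> set u" "Star \<notin> set t"
    using dec1 by blast
  define W where "W = Star # u @ Star # t @ [Star]"
  define F where "F = Zero # u @ One # t @ [Star]"
  define L where "L = Star # u @ Zero # t @ [One]"
  have ns: "nstars W = 3" "nstars F = 1" "nstars L = 1"
    using C by (simp_all add: W_def F_def L_def)
  have lam: "lam n C = [W, L, F]"
    using assms k1 C by (simp add: lam_def wrap_def ffirst_def llast_def W_def F_def L_def)
  have g1: "G (Suc (Suc n)) W = L"
    using assms C by (simp add: G_def llast_def W_def L_def)
  have c: "mC L F"
    using mC_I[of "[]" u t "[]"] C by (simp add: L_def F_def)
  show ?thesis
  proof (cases "1 mod 4 = n mod 4")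
    case True
    have h: "nstars W mod 4 = Suc (Suc n) mod 4" "nstars L mod 4 \<noteq> Suc (Suc n) mod 4"
      unfolding ns using m1[OF True] m2[OF True] by auto
    have "Inv (Suc (Suc n)) W L" by (rule InvY_down) (use h ns g1 in auto)
    moreover have "Inv (Suc (Suc n)) L F" by (rule InvN) (use h c in auto)
    ultimately show ?thesis using True k1 unfolding rho_def lam by simp
  next
    case False
    have h0: "1 mod 4 = Suc (Suc n) mod 4" using m5[OF _ assms(1) False] by simp
    have h: "nstars F mod 4 = Suc (Suc n) mod 4" "nstars L mod 4 = Suc (Suc n) mod 4"
      unfolding ns using h0 by auto
    have "Inv (Suc (Suc n)) F L" by (rule InvY_C) (use h c assms(1) in auto)
    moreover have "Inv (Suc (Suc n)) L W" by (rule InvY_up) (use h ns g1 in auto)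
    ultimately show ?thesis using False k1 unfolding rho_def lam by simp
  qed
qed

lemma m8: "a mod 4 = Suc (Suc b) mod 4 \<Longrightarrow> a mod 4 \<noteq> b mod 4"
  for a b :: nat unfolding plus2_mod using mod4_cases[of b] mod4_cases[of a] by (elim disjE; simp)
lemma m9: "a mod 4 \<noteq> b mod 4 \<Longrightarrow> Suc (Suc a) mod 4 \<noteq> Suc (Suc b) mod 4"
  for a b :: nat using m7 by blast

definition bb :: "nat \<Rightarrow> chain \<Rightarrow> chain" where
  "bb n C = (if even n then llast (wrap C) else ffirst (wrap C))"

lemma lam_ne: "lam n C \<noteq> []" by (simp add: lam_def)
lemma hd_lam: "hd (lam n C) = wrap C" by (simp add: lam_def)
lemma last_lam: assumes "nstars C mod 2 = n mod 2" shows "last (lam n C) = bb n C"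
proof (cases "even n")
  case True
  show ?thesis
  proof (cases "2 \<le> nstars C")
    case False
    then have "nstars C = 0" using assms True by (cases "nstars C") (auto simp: not_le)
    then have "Star \<notin> set C" using ns0_iff by blast
    then show ?thesis using True False by (simp add: lam_def bb_def llast_def wrap_def)
  qed (use True in \<open>simp add: lam_def bb_def\<close>)
qed (simp add: lam_def bb_def)

lemma hd_rho: "nstars C mod 2 = n mod 2 \<Longrightarrow>
  hd (rho n C) = (if nstars C mod 4 = n mod 4 then wrap C else bb n C)"
  using lam_ne[of n C] by (simp add: rho_def hd_lam last_lam hd_rev)
lemma last_rho: "nstars C mod 2 = n mod 2 \<Longrightarrow>
  last (rho n C) = (if nstars C mod 4 = n mod 4 then bb n C else wrap C)"
  using lam_ne[of n C] by (simp add: rho_def hd_lam last_lam last_rev)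

lemma ns_mA: "mA x y \<Longrightarrow> nstars x = Suc (Suc (nstars y))"
  unfolding mA_def by auto
lemma ns_mB: "mB x y \<Longrightarrow> nstars x = Suc (Suc (nstars y))"
  unfolding mB_def by auto

lemma ns_bb: "nstars (bb n C) = nstars C"
proof -
  have "2 \<le> nstars (wrap C)" by (simp add: wrap_def)
  then show ?thesis unfolding bb_def using ns_mA[OF mA_ffirst[of "wrap C"]] ns_mA[OF mA_llast[of "wrap C"]]
    by (simp add: wrap_def)
qed

lemma mA_wrap: "mA x y \<Longrightarrow> mA (wrap x) (wrap y)"
  unfolding mA_def wrap_def by (metis append.simps(2) append_Cons append_assoc)
lemma mB_wrap: "mB x y \<Longrightarrow> mB (wrap x) (wrap y)"
  unfolding mB_def wrap_def by (metis append.simps(2) append_Cons append_assoc)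
lemma ns_G: "2 \<le> nstars x \<Longrightarrow> nstars x = Suc (Suc (nstars (G n x)))"
  using ns_mA[OF mA_G] by blast

lemma across:
  assumes pD: "nstars D mod 2 = n mod 2" and pD': "nstars D' mod 2 = n mod 2"
    and I: "Inv n D D'"
  shows "Inv (Suc (Suc n)) (last (rho n D)) (hd (rho n D'))"
proof (cases "nstars D mod 4 = n mod 4")
  case Y: True
  have lx: "last (rho n D) = bb n D" using last_rho[OF pD] Y by simp
  have xN: "nstars (bb n D) mod 4 \<noteq> Suc (Suc n) mod 4"
    using ns_bb[of n D] m2[OF Y] by simp
  from I Y have cases: "(2 \<le> nstars D \<and> D' = G n D) \<or> (2 \<le> nstars D' \<and> D = G n D') \<or> (odd n \<and> mC D' D)"
    unfolding Inv_def by simp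
  then show ?thesis
  proof (elim disjE conjE)
    assume k2: "2 \<le> nstars D" and D': "D' = G n D"
    have "nstars D' mod 4 \<noteq> n mod 4"
      using ns_G[OF k2, of n] Y m6 m8 D' by metis
    then have hy: "hd (rho n D') = bb n D'" using hd_rho[OF pD'] by simp
    have "mA (bb n D) (bb n D') \<or> mB (bb n D) (bb n D')"
    proof (cases "even n")
      case True
      obtain u v m where D: "D = u @ Star # v @ Star # m" "Star \<notin> set u" "Star \<notin> set v"
        using dec_first2[OF k2] by blast
      have D'f: "D' = u @ Zero # v @ One # m" using D D' True by (simp add: G_def ffirst_form)
      show ?thesis
      proof (cases "Star \<in> set m")
        case True
        have "mA (bb n D) (bb n D')"
          using mA_I[of "Star#u" v "rev (repl1 Zero (rev m)) @ [One]"] D D'f True \<open>even n\<close>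
          by (simp add: bb_def llast_def wrap_def)
        then show ?thesis ..
      next
        case False
        have "mB (bb n D) (bb n D')"
          using mB_I[of "[]" u v "m @ [One]"] D D'f False \<open>even n\<close>
          by (simp add: bb_def llast_def wrap_def)
        then show ?thesis ..
      qed
    next
      case False
      obtain u v m where D: "D = u @ Star # v @ Star # m" "Star \<notin> set v" "Star \<notin> set m"
        using dec_last2[OF k2] by blast
      have D'f: "D' = u @ Zero # v @ One # m" using D D' False by (simp add: G_def llast_form)
      have "odd (nstars D)" using pD False by presburger
      then have "Star \<in> set u" using D star_pos[of u] by (cases "nstars u") auto
      then have "mA (bb n D) (bb n D')"
        using mA_I[of "Zero # repl1 One u" v "m @ [Star]"] D D'f False
        by (simp add: bb_def ffirst_def wrap_def)
      then show ?thesis ..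
    qed
    then show ?thesis unfolding lx hy using xN by (intro InvN) auto
  next
    assume k2: "2 \<le> nstars D'" and D: "D = G n D'"
    have "nstars D' mod 4 \<noteq> n mod 4"
      using ns_G[OF k2, of n] Y m1 m8 D by metis
    then have hy: "hd (rho n D') = bb n D'" using hd_rho[OF pD'] by simp
    have "mA (bb n D') (bb n D) \<or> mB (bb n D') (bb n D)"
    proof (cases "even n")
      case True
      obtain u v m where D': "D' = u @ Star # v @ Star # m" "Star \<notin> set u" "Star \<notin> set v"
        using dec_first2[OF k2] by blast
      have Df: "D = u @ Zero # v @ One # m" using D D' True by (simp add: G_def ffirst_form)
      show ?thesis
      proof (cases "Star \<in> set m")
        case True
        have "mA (bb n D') (bb n D)"
          using mA_I[of "Star#u" v "rev (repl1 Zero (rev m)) @ [One]"] D' Df True \<open>even n\<close>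
          by (simp add: bb_def llast_def wrap_def)
        then show ?thesis ..
      next
        case False
        have "mB (bb n D') (bb n D)"
          using mB_I[of "[]" u v "m @ [One]"] D' Df False \<open>even n\<close>
          by (simp add: bb_def llast_def wrap_def)
        then show ?thesis ..
      qed
    next
      case False
      obtain u v m where D': "D' = u @ Star # v @ Star # m" "Star \<notin> set v" "Star \<notin> set m"
        using dec_last2[OF k2] by blast
      have Df: "D = u @ Zero # v @ One # m" using D D' False by (simp add: G_def llast_form)
      have "odd (nstars D')" using pD' False by presburger
      then have "Star \<in> set u" using D' star_pos[of u] by (cases "nstars u") auto
      then have "mA (bb n D') (bb n D)"
        using mA_I[of "Zero # repl1 One u" v "m @ [Star]"] D' Df False
        by (simp add: bb_def ffirst_def wrap_def)
      then show ?thesis ..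
    qed
    then show ?thesis unfolding lx hy using xN by (intro InvN) auto
  next
    assume on: "odd n" and c: "mC D' D"
    then obtain a b c d where D': "D' = a @ Star # b @ Zero # c @ One # d"
      and Df: "D = a @ Zero # b @ One # c @ Star # d"
      and st: "Star \<notin> set a" "Star \<notin> set b" "Star \<notin> set c" "Star \<notin> set d"
      unfolding mC_def by blast
    have "nstars D' = nstars D" using D' Df st by simp
    then have hy: "hd (rho n D') = wrap D'" using hd_rho[OF pD'] Y by simp
    have "mB (wrap D') (bb n D)"
      using mB_I[of "[]" a b "c @ One # d @ [Star]"] D' Df st on
      by (simp add: bb_def ffirst_def wrap_def)
    then show ?thesis unfolding lx hy using xN by (intro InvN) auto
  qed
next
  case N: False
  have N2: "nstars D mod 4 = Suc (Suc n) mod 4"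
  proof (cases "even n")
    case True
    then show ?thesis using m4[OF _ True N] pD by presburger
  next
    case False
    then show ?thesis using m5[OF _ False N] pD by presburger
  qed
  have lx: "last (rho n D) = wrap D" using last_rho[OF pD] N by simp
  have xN: "nstars (wrap D) mod 4 \<noteq> Suc (Suc n) mod 4"
    using m9[OF N] by (simp add: wrap_def)
  from I N have cases: "mA D D' \<or> mA D' D \<or> mB D D' \<or> mB D' D \<or> mC D D'"
    unfolding Inv_def by simp
  then show ?thesis
  proof (elim disjE)
    assume h: "mA D D'"
    have "nstars D' mod 4 = n mod 4" using ns_mA[OF h] N2 m7 by metis
    then have hy: "hd (rho n D') = wrap D'" using hd_rho[OF pD'] by simp
    show ?thesis unfolding lx hy using xN mA_wrap[OF h] by (intro InvN) auto
  next
    assume h: "mA D' D"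
    have "nstars D' mod 4 = n mod 4" using ns_mA[OF h] N2 m3 by metis
    then have hy: "hd (rho n D') = wrap D'" using hd_rho[OF pD'] by simp
    show ?thesis unfolding lx hy using xN mA_wrap[OF h] by (intro InvN) auto
  next
    assume h: "mB D D'"
    have "nstars D' mod 4 = n mod 4" using ns_mB[OF h] N2 m7 by metis
    then have hy: "hd (rho n D') = wrap D'" using hd_rho[OF pD'] by simp
    show ?thesis unfolding lx hy using xN mB_wrap[OF h] by (intro InvN) auto
  next
    assume h: "mB D' D"
    have "nstars D' mod 4 = n mod 4" using ns_mB[OF h] N2 m3 by metis
    then have hy: "hd (rho n D') = wrap D'" using hd_rho[OF pD'] by simp
    show ?thesis unfolding lx hy using xN mB_wrap[OF h] by (intro InvN) auto
  next
    assume h: "mC D D'"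
    then obtain a b c d where Df: "D = a @ Star # b @ Zero # c @ One # d"
      and D': "D' = a @ Zero # b @ One # c @ Star # d"
      and st: "Star \<notin> set a" "Star \<notin> set b" "Star \<notin> set c" "Star \<notin> set d"
      unfolding mC_def by blast
    have e: "nstars D' = nstars D" "nstars D = 1" using D' Df st by simp_all
    then have hy: "hd (rho n D') = bb n D'" using hd_rho[OF pD'] N by simp
    have on: "odd n" using pD e by presburger
    have "mB (wrap D) (bb n D')"
      using mB_I[of "[]" a b "c @ One # d @ [Star]"] D' Df st on
      by (simp add: bb_def ffirst_def wrap_def)
    then show ?thesis unfolding lx hy using xN by (intro InvN) auto
  qed
qed

lemma succ_concat:
  "(\<forall>x\<in>set xs. f x \<noteq> []) \<Longrightarrow> (\<forall>x\<in>set xs. successively R (f x)) \<Longrightarrow>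
   successively (\<lambda>a b. R (last (f a)) (hd (f b))) xs \<Longrightarrow> successively R (concat (map f xs))"
proof (induction xs)
  case Nil
  then show ?case by simp
next
  case (Cons x xs)
  have IH: "successively R (concat (map f xs))"
    using Cons.IH Cons.prems by (cases "xs = []") (auto simp: successively_Cons)
  show ?case
  proof (cases xs)
    case Nil
    then show ?thesis using Cons by simp
  next
    case (Cons y ys)
    have "R (last (f x)) (hd (f y))" using Cons \<open>successively _ (x # xs)\<close> by simp
    moreover have "f y \<noteq> []" using Cons \<open>\<forall>x\<in>set (x # xs). f x \<noteq> []\<close> by simp
    ultimately show ?thesis using IH \<open>\<forall>x\<in>set (x # xs). successively R (f x)\<close> Cons
      by (simp add: successively_append_iff)
  qed
qed

lemma par_lam: assumes "x \<in> set (lam n C)" shows "nstars x mod 2 = nstars C mod 2"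
proof -
  define k where "k = nstars C"
  have w: "nstars (wrap C) = Suc (Suc k)" by (simp add: wrap_def k_def)
  then have w2: "2 \<le> nstars (wrap C)" by simp
  have f: "nstars (ffirst (wrap C)) = k" using ns_mA[OF mA_ffirst[OF w2]] w by simp
  have l: "nstars (llast (wrap C)) = k" using ns_mA[OF mA_llast[OF w2]] w by simp
  have fl: "Suc (Suc (nstars (ffirst (llast (wrap C))))) = k" if "2 \<le> k"
    using ns_mA[OF mA_ffirst[of "llast (wrap C)"]] l that by simp
  have lf: "Suc (Suc (nstars (llast (ffirst (wrap C))))) = k" if "2 \<le> k"
    using ns_mA[OF mA_llast[of "ffirst (wrap C)"]] f that by simp
  have z: "nstars (Zero # C @ [One]) = k" by (simp add: k_def)
  have SS: "a mod 2 = b mod 2" if "Suc (Suc a) = b" for a b :: nat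
    using that by auto
  have w': "nstars (wrap C) mod 2 = k mod 2" using SS[OF w[symmetric]] by simp
  have fl': "nstars (ffirst (llast (wrap C))) mod 2 = k mod 2" if "2 \<le> k"
    using SS[OF fl[OF that]] .
  have lf': "nstars (llast (ffirst (wrap C))) mod 2 = k mod 2" if "2 \<le> k"
    using SS[OF lf[OF that]] .
  show ?thesis using assms f l w' z fl' lf' unfolding k_def[symmetric] lam_def
    by (auto split: if_splits)
qed

lemma inv_all: "successively (Inv n) (Lambda n) \<and> (\<forall>x\<in>set (Lambda n). nstars x mod 2 = n mod 2)"
proof (induction n rule: Lambda.induct)
  case 1
  then show ?case by simp
next
  case 2
  then show ?case by simp
next
  case (3 n)
  have S: "successively (Inv n) (Lambda n)" and P: "\<forall>x\<in>set (Lambda n). nstars x mod 2 = n mod 2"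
    using 3 by auto
  have A: "successively (Inv (Suc (Suc n))) (concat (map (rho n) (Lambda n)))"
  proof (rule succ_concat)
    show "\<forall>x\<in>set (Lambda n). rho n x \<noteq> []" using lam_ne by (simp add: rho_def)
    show "\<forall>x\<in>set (Lambda n). successively (Inv (Suc (Suc n))) (rho n x)"
    proof
      fix x assume "x \<in> set (Lambda n)"
      then have "nstars x mod 2 = n mod 2" using P by blast
      then show "successively (Inv (Suc (Suc n))) (rho n x)"
        using within_even[of n x] within_odd[of n x]
        by (cases "even n") (auto simp: even_iff_mod_2_eq_zero)
    qed
    show "successively (\<lambda>a b. Inv (Suc (Suc n)) (last (rho n a)) (hd (rho n b))) (Lambda n)"
      using S by (rule successively_mono) (use across P in blast)
  qed
  have B: "\<forall>x\<in>set (concat (map (rho n) (Lambda n))). nstars x mod 2 = Suc (Suc n) mod 2"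
  proof
    fix x assume "x \<in> set (concat (map (rho n) (Lambda n)))"
    then obtain C where C: "C \<in> set (Lambda n)" "x \<in> set (rho n C)" by auto
    then have "x \<in> set (lam n C)" by (simp add: rho_def split: if_splits)
    then have "nstars x mod 2 = nstars C mod 2" by (rule par_lam)
    then show "nstars x mod 2 = Suc (Suc n) mod 2" using P C by simp
  qed
  show ?case using A B by simp
qed

theorem theorem23:
  fixes n :: nat
  assumes "n \<ge> 1"
  shows "\<forall>i. Suc i < length (Lambda n) \<longrightarrow>
           hamming (Lambda n ! i) (Lambda n ! Suc i) \<le> 3"
  using inv_all[of n] ham_Inv successively_nth by blast

end
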